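(* For each positive integer $n$ there is a multiplicative function $f_n$ from the positive integers to the positive integers, with $f_n(p^{k-1})\le f_n(p^k)$ for all primes $p$ and integers $k\ge1$, such that the set of $f_n$-practical numbers has asymptotic density $1-\varphi(n)/n$.
   Context: $\varphi$ is Euler's totient function. $f$ multiplicative means $f(1)=1$ and $f(ab)=f(a)f(b)$ for coprime $a,b$. $S_f(N)=\sum_{d\mid N} f(d)$. A positive integer $N$ is $f$-practical if every positive integer $m\le S_f(N)$ equals $\sum_{d\in\mathcal{D}}f(d)$ for some set $\mathcal{D}$ of distinct divisors of $N$. *)

theory Defs
  imports "HOL-Number_Theory.Number_Theory"
begin

definition multiplicative_fun :: "(nat \<Rightarrow> nat) \<Rightarrow> bool" where
  "multiplicative_fun f \<longleftrightarrow> f 1 = 1 \<and>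
     (\<forall>a b. a > 0 \<longrightarrow> b > 0 \<longrightarrow> coprime a b \<longrightarrow> f (a * b) = f a * f b)"

definition S_f :: "(nat \<Rightarrow> nat) \<Rightarrow> nat \<Rightarrow> nat" where
  "S_f f N = (\<Sum>d\<in>{d. d dvd N}. f d)"

definition f_practical :: "(nat \<Rightarrow> nat) \<Rightarrow> nat \<Rightarrow> bool" where
  "f_practical f N \<longleftrightarrow> N > 0 \<and>
     (\<forall>m. 1 \<le> m \<and> m \<le> S_f f N \<longrightarrow>
        (\<exists>D. D \<subseteq> {d. d dvd N} \<and> m = (\<Sum>d\<in>D. f d)))"

definition has_density :: "nat set \<Rightarrow> real \<Rightarrow> bool" where
  "has_density A \<delta> \<longleftrightarrow>
     (\<lambda>x. real (card (A \<inter> {1..x})) / real x) \<longlonglongrightarrow> \<delta>"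

end

theory Submission
  imports Defs
begin


definition PS :: "nat \<Rightarrow> nat \<Rightarrow> nat set" where
  "PS n x = {q. prime q \<and> q dvd x \<and> \<not> q dvd n}"
definition fn :: "nat \<Rightarrow> nat \<Rightarrow> nat" where
  "fn n x = 3 ^ card (PS n x)"

lemma PS_finite: "x > 0 \<Longrightarrow> finite (PS n x)"
  unfolding PS_def by (rule finite_subset[of _ "{..x}"]) (auto dest: dvd_imp_le)

lemma fn_pos: "fn n x > 0" by (simp add: fn_def)

lemma fn_1: "fn n 1 = 1"
  unfolding fn_def PS_def by (auto simp: prime_gt_1_nat)

lemma fn_mult:
  assumes "a > 0" "b > 0" "coprime a b"
  shows "fn n (a*b) = fn n a * fn n b"
proof -
  have U: "PS n (a*b) = PS n a \<union> PS n b"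
    unfolding PS_def using prime_dvd_mult_iff by auto
  have D: "PS n a \<inter> PS n b = {}"
    unfolding PS_def using assms(3)
    by (auto dest: coprime_common_divisor_nat simp: prime_gt_1_nat)
  show ?thesis unfolding fn_def U
    using card_Un_disjoint[OF PS_finite[OF assms(1)] PS_finite[OF assms(2)] D]
    by (simp add: power_add)
qed

lemma PS_pow: "prime q \<Longrightarrow> k \<ge> 1 \<Longrightarrow> PS n (q^k) = PS n q"
  unfolding PS_def
  by (auto dest: prime_dvd_power primes_dvd_imp_eq intro: dvd_power simp: prime_gt_1_nat)

lemma fn_pow: "prime q \<Longrightarrow> k \<ge> 1 \<Longrightarrow> fn n (q^k) = fn n q"
  by (simp add: fn_def PS_pow)

lemma fn_prime: "prime q \<Longrightarrow> fn n q = (if q dvd n then 1 else 3)"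
proof -
  assume q: "prime q"
  have "PS n q = (if q dvd n then {} else {q})"
    unfolding PS_def using q by (auto dest: primes_dvd_imp_eq)
  thus ?thesis by (simp add: fn_def)
qed

lemma fn_mono: "prime p \<Longrightarrow> k \<ge> 1 \<Longrightarrow> fn n (p ^ (k - 1)) \<le> fn n (p ^ k)"
  by (cases "k = 1") (auto simp: fn_pow fn_1[simplified] fn_prime)

definition complete :: "(nat \<Rightarrow> nat) \<Rightarrow> nat set \<Rightarrow> bool" where
  "complete f X \<longleftrightarrow> (\<forall>m \<le> sum f X. \<exists>D\<subseteq>X. m = sum f D)"

lemma complete_ones:
  assumes "finite X" "\<forall>x\<in>X. f x = 1"
  shows "complete f X"
  unfolding complete_def
proof (intro allI impI)
  fix m assume "m \<le> sum f X"
  hence "m \<le> card X" using assms by simp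
  then obtain D where D: "D \<subseteq> X" "card D = m" using obtain_subset_with_card_n by metis
  have "sum f D = card D" using assms D by (simp add: subset_iff)
  thus "\<exists>D\<subseteq>X. m = sum f D" using D by auto
qed

lemma union3:
  assumes fX: "finite X" and fZ: "finite Z" and cX: "complete f X" and cZ: "complete f Z"
    and s2: "2 \<le> sum f X" and inj: "inj_on h Z" and hz: "\<forall>z\<in>Z. f (h z) = 3 * f z"
    and disj: "X \<inter> h ` Z = {}"
  shows "complete f (X \<union> h ` Z)"
  unfolding complete_def
proof (intro allI impI)
  fix m assume m: "m \<le> sum f (X \<union> h ` Z)"
  have reid: "\<And>D. D \<subseteq> Z \<Longrightarrow> sum f (h ` D) = 3 * sum f D"
  proof -
    fix D assume "D \<subseteq> Z"
    hence "inj_on h D" using inj inj_on_subset by blast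
    hence "sum f (h ` D) = sum (f \<circ> h) D" by (rule sum.reindex)
    also have "\<dots> = sum (\<lambda>z. 3 * f z) D" using hz \<open>D \<subseteq> Z\<close> by (intro sum.cong) auto
    finally show "sum f (h ` D) = 3 * sum f D" by (simp add: sum_distrib_left)
  qed
  have sU: "sum f (X \<union> h ` Z) = sum f X + 3 * sum f Z"
  proof -
    have "sum f (h ` Z) = 3 * sum f Z" using reid by blast
    thus ?thesis using sum.union_disjoint[OF fX finite_imageI[OF fZ] disj] by metis
  qed
  define t where "t = min (sum f Z) (m div 3)"
  define r where "r = m - 3 * t"
  have tm: "3 * t \<le> m" unfolding t_def by linarith
  have rX: "r \<le> sum f X"
  proof (cases "t = sum f Z")
    case True thus ?thesis using m sU unfolding r_def by simp
  next
    case False hence "t = m div 3" unfolding t_def by linarith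
    hence "r = m mod 3" unfolding r_def using div_mult_mod_eq[of m 3] by linarith
    thus ?thesis using s2 by simp
  qed
  have "\<exists>D\<subseteq>X. r = sum f D" using cX rX unfolding complete_def by simp
  then obtain D1 where D1: "D1 \<subseteq> X" "r = sum f D1" by blast
  have "t \<le> sum f Z" unfolding t_def by simp
  hence "\<exists>D\<subseteq>Z. t = sum f D" using cZ unfolding complete_def by simp
  then obtain D2 where D2: "D2 \<subseteq> Z" "t = sum f D2" by blast
  have "sum f (D1 \<union> h ` D2) = sum f D1 + sum f (h ` D2)"
  proof (rule sum.union_disjoint)
    show "finite D1" using D1(1) fX by (rule finite_subset)
    show "finite (h ` D2)" using D2(1) fZ by (simp add: finite_subset)
    show "D1 \<inter> h ` D2 = {}" using D1(1) D2(1) disj by blast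
  qed
  also have "\<dots> = r + 3 * t" using D1(2) D2(2) reid[OF D2(1)] by simp
  also have "\<dots> = m" using tm r_def by simp
  finally have "m = sum f (D1 \<union> h ` D2)" by simp
  moreover have "D1 \<union> h ` D2 \<subseteq> X \<union> h ` Z" using D1(1) D2(1) by blast
  ultimately show "\<exists>D\<subseteq>X \<union> h ` Z. m = sum f D" by blast
qed


lemma div_decomp:
  fixes y q :: nat
  assumes y: "y > 0" and q: "prime q" and nq: "\<not> q dvd y"
  shows "{d. d dvd y * q ^ Suc e} = {d. d dvd y * q ^ e} \<union> (\<lambda>d. d * q ^ Suc e) ` {d. d dvd y}"
    and "{d. d dvd y * q ^ e} \<inter> (\<lambda>d. d * q ^ Suc e) ` {d. d dvd y} = {}"
proof -
  show "{d. d dvd y * q ^ Suc e} = {d. d dvd y * q ^ e} \<union> (\<lambda>d. d * q ^ Suc e) ` {d. d dvd y}"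
  proof (intro equalityI subsetI)
    fix d assume "d \<in> {d. d dvd y * q ^ Suc e}"
    hence "d dvd y * q ^ Suc e" by simp
    hence "\<exists>b' c'. d = b' * c' \<and> b' dvd y \<and> c' dvd q ^ Suc e" by (rule division_decomp)
    then obtain a b where ab: "d = a * b" "a dvd y" "b dvd q ^ Suc e" by blast
    from ab(3) have "\<exists>i\<le>Suc e. b = q ^ i" by (simp only: divides_primepow_nat[OF q])
    then obtain j where j: "j \<le> Suc e" "b = q ^ j" by blast
    show "d \<in> {d. d dvd y * q ^ e} \<union> (\<lambda>d. d * q ^ Suc e) ` {d. d dvd y}"
    proof (cases "j \<le> e")
      case True
      hence "q ^ j dvd q ^ e" by (simp add: le_imp_power_dvd)
      hence "a * q ^ j dvd y * q ^ e" using ab(2) by (intro mult_dvd_mono)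
      hence "d dvd y * q ^ e" using ab(1) j(2) by simp
      thus ?thesis by simp
    next
      case False hence "j = Suc e" using j by simp
      hence "d = a * q ^ Suc e" using ab j by simp
      thus ?thesis using ab(2) by blast
    qed
  next
    fix d assume "d \<in> {d. d dvd y * q ^ e} \<union> (\<lambda>d. d * q ^ Suc e) ` {d. d dvd y}"
    thus "d \<in> {d. d dvd y * q ^ Suc e}"
    proof
      assume "d \<in> {d. d dvd y * q ^ e}"
      hence "d dvd y * q ^ e" by simp
      moreover have "y * q ^ e dvd y * q ^ Suc e" by simp
      ultimately have "d dvd y * q ^ Suc e" by (rule dvd_trans)
      thus ?thesis by simp
    next
      assume "d \<in> (\<lambda>d. d * q ^ Suc e) ` {d. d dvd y}"
      then obtain d' where d': "d = d' * q ^ Suc e" "d' dvd y" by blast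
      have "d' * q ^ Suc e dvd y * q ^ Suc e" using d'(2) dvd_refl by (rule mult_dvd_mono)
      thus ?thesis using d'(1) by simp
    qed
  qed
  show "{d. d dvd y * q ^ e} \<inter> (\<lambda>d. d * q ^ Suc e) ` {d. d dvd y} = {}"
  proof (rule equals0I)
    fix x assume x: "x \<in> {d. d dvd y * q ^ e} \<inter> (\<lambda>d. d * q ^ Suc e) ` {d. d dvd y}"
    hence x1: "x dvd y * q ^ e" by simp
    from x have "x \<in> (\<lambda>d. d * q ^ Suc e) ` {d. d dvd y}" by (rule IntD2)
    then obtain d where d: "x = d * q ^ Suc e" by (rule imageE)
    from x1 d have "d * q ^ Suc e dvd y * q ^ e" by simp
    hence "q ^ Suc e dvd y * q ^ e" by (rule dvd_mult_right)
    hence "q * q ^ e dvd y * q ^ e" by (simp only: power_Suc)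
    moreover have "q ^ e > 0" using q by (simp add: prime_gt_0_nat)
    ultimately have "q dvd y" by (metis mult.commute nat_mult_dvd_cancel1)
    thus False using nq by simp
  qed
qed

lemma sum2:
  fixes p M :: nat
  assumes p: "prime p" "p dvd n" and M: "M > 0" "p dvd M"
  shows "2 \<le> sum (fn n) {d. d dvd M}"
proof -
  have "{1, p} \<subseteq> {d. d dvd M}" using M by auto
  moreover have "finite {d. d dvd M}" using M by simp
  ultimately have "sum (fn n) {1, p} \<le> sum (fn n) {d. d dvd M}" by (intro sum_mono2) auto
  moreover have "sum (fn n) {1, p} = 2" using p fn_1[of n] fn_prime[of p n] prime_gt_1_nat[of p] by simp
  ultimately show ?thesis by simp
qed

lemma stepA:
  fixes y q :: nat
  assumes y: "y > 0" and q: "prime q" "\<not> q dvd n" and nq: "\<not> q dvd y"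
    and c: "complete (fn n) {d. d dvd y}" and s: "2 \<le> sum (fn n) {d. d dvd y}"
  shows "complete (fn n) {d. d dvd y * q ^ e} \<and> 2 \<le> sum (fn n) {d. d dvd y * q ^ e}"
proof (induction e)
  case 0 thus ?case using c s by simp
next
  case (Suc e)
  have fin: "finite {d. d dvd y * q ^ e}" "finite {d. d dvd y}" using y q by (auto simp: prime_gt_0_nat)
  have inj: "inj_on (\<lambda>d. d * q ^ Suc e) {d. d dvd y}" using q by (auto simp: inj_on_def prime_gt_0_nat)
  have hz: "\<forall>z\<in>{d. d dvd y}. fn n (z * q ^ Suc e) = 3 * fn n z"
  proof
    fix z assume "z \<in> {d. d dvd y}"
    hence z: "z dvd y" by simp
    hence zp: "z > 0" using y by (auto intro: Nat.gr0I)
    have "\<not> q dvd z" using z nq by (meson dvd_trans)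
    hence "coprime z q" using q prime_imp_coprime_nat[of q z] by (simp add: coprime_commute)
    hence "coprime z (q ^ Suc e)" by simp
    hence "fn n (z * q ^ Suc e) = fn n z * fn n (q ^ Suc e)" using zp q by (intro fn_mult) (auto simp: prime_gt_0_nat)
    also have "\<dots> = fn n z * 3" using q by (simp add: fn_pow fn_prime del: power_Suc)
    finally show "fn n (z * q ^ Suc e) = 3 * fn n z" by simp
  qed
  have sub: "{d. d dvd y} \<subseteq> {d. d dvd y * q ^ e}" by auto
  have "complete (fn n) ({d. d dvd y * q ^ e} \<union> (\<lambda>d. d * q ^ Suc e) ` {d. d dvd y})"
  proof (rule union3)
    show "complete (fn n) {d. d dvd y * q ^ e}" using Suc.IH by (rule conjunct1)
    show "2 \<le> sum (fn n) {d. d dvd y * q ^ e}" using Suc.IH by (rule conjunct2)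
  qed (fact fin(1) fin(2) c inj hz div_decomp(2)[OF y q(1) nq, of e])+
  moreover have "2 \<le> sum (fn n) {d. d dvd y * q ^ Suc e}"
  proof -
    have "{d. d dvd y} \<subseteq> {d. d dvd y * q ^ Suc e}" by auto
    moreover have "finite {d. d dvd y * q ^ Suc e}" using y q by (auto simp: prime_gt_0_nat)
    ultimately have "sum (fn n) {d. d dvd y} \<le> sum (fn n) {d. d dvd y * q ^ Suc e}" by (intro sum_mono2) auto
    thus ?thesis using s by simp
  qed
  ultimately show ?case unfolding div_decomp(1)[OF y q(1) nq, of e] by (rule conjI)
qed


lemma main_complete:
  fixes p N :: nat
  assumes p: "prime p" "p dvd n"
  shows "N > 0 \<Longrightarrow> p dvd N \<Longrightarrow> complete (fn n) {d. d dvd N}"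
proof (induction N rule: less_induct)
  case (less N)
  show ?case
  proof (cases "\<exists>q. prime q \<and> q dvd N \<and> \<not> q dvd n")
    case True
    then obtain q :: nat where q: "prime q" "q dvd N" "\<not> q dvd n" by blast
    define e where "e = multiplicity q N"
    have Nne: "N \<noteq> 0" using less.prems by simp
    have nu: "\<not> is_unit q" using q(1) by (metis not_prime_unit)
    obtain K where K: "N = q ^ e * K" "\<not> q dvd K" unfolding e_def
      by (rule multiplicity_decompose'[OF Nne nu])
    have e1: "e \<ge> 1" unfolding e_def using q less.prems
      by (simp add: prime_multiplicity_gt_zero_iff Suc_le_eq)
    have Kpos: "K > 0" using K less.prems by (cases "K = 0") auto
    have q2: "q \<ge> 2" using q by (simp add: prime_ge_2_nat)
    have "q ^ 1 \<le> q ^ e" using e1 q2 by (intro power_increasing) auto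
    hence qe: "q ^ e \<ge> 2" using q2 by simp
    have KN: "K < N" using K(1) qe Kpos by (metis less_le_trans mult_le_mono1 nat_mult_1 one_less_numeral_iff semiring_norm(76) mult_less_mono1 less_imp_le_nat)
    have pq: "p \<noteq> q" using p q by auto
    have pK: "p dvd K"
    proof -
      have "p dvd q ^ e * K" using less.prems K(1) by simp
      hence "p dvd q ^ e \<or> p dvd K" using p(1) by (simp add: prime_dvd_mult_iff)
      moreover have "\<not> p dvd q ^ e"
      proof
        assume "p dvd q ^ e"
        hence "p dvd q" using p(1) by (metis prime_dvd_power)
        hence "p = q" using p(1) q(1) by (simp add: primes_dvd_imp_eq)
        thus False using pq by simp
      qed
      ultimately show ?thesis by simp
    qed
    have cK: "complete (fn n) {d. d dvd K}" using less.IH[OF KN Kpos pK] .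
    have sK: "2 \<le> sum (fn n) {d. d dvd K}" using sum2[OF p Kpos pK] .
    have "complete (fn n) {d. d dvd K * q ^ e}"
      using stepA[OF Kpos q(1) q(3) K(2) cK sK, of e] by (rule conjunct1)
    moreover have "K * q ^ e = N" using K(1) by simp
    ultimately show ?thesis by simp
  next
    case False
    have "\<forall>d\<in>{d. d dvd N}. fn n d = 1"
    proof
      fix d assume "d \<in> {d. d dvd N}"
      hence d: "d dvd N" by simp
      have "PS n d = {}" unfolding PS_def using False d by (auto intro: dvd_trans)
      thus "fn n d = 1" by (simp add: fn_def)
    qed
    moreover have "finite {d. d dvd N}" using less.prems by simp
    ultimately show ?thesis by (intro complete_ones)
  qed
qed

lemma fn_ge3:
  assumes "d > 0" "prime r" "r dvd d" "\<not> r dvd n"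
  shows "fn n d \<ge> 3"
proof -
  have "r \<in> PS n d" using assms unfolding PS_def by simp
  hence "card (PS n d) \<ge> 1" using PS_finite[OF assms(1)] by (metis One_nat_def Suc_leI card_gt_0_iff empty_iff)
  hence "(3::nat) ^ 1 \<le> 3 ^ card (PS n d)" by (intro power_increasing) auto
  thus ?thesis by (simp add: fn_def)
qed

lemma practical_iff:
  "f_practical (fn n) N \<longleftrightarrow> N = 1 \<or> (N > 0 \<and> \<not> coprime N n)"
proof
  assume pr: "f_practical (fn n) N"
  hence Npos: "N > 0" by (simp add: f_practical_def)
  show "N = 1 \<or> (N > 0 \<and> \<not> coprime N n)"
  proof (rule ccontr)
    assume "\<not> ?thesis"
    hence N1: "N \<noteq> 1" and cop: "coprime N n" using Npos by auto
    obtain q :: nat where q: "prime q" "q dvd N" using prime_factor_nat[OF N1] by blast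
    have nd: "\<And>r. r dvd N \<Longrightarrow> r dvd n \<Longrightarrow> r = 1" using cop coprime_common_divisor_nat by blast
    have qn: "\<not> q dvd n" using nd[OF q(2)] q(1) by (auto simp: prime_gt_1_nat)
    have fin: "finite {d. d dvd N}" using Npos by simp
    have "{1, q} \<subseteq> {d. d dvd N}" using q by auto
    hence "sum (fn n) {1, q} \<le> sum (fn n) {d. d dvd N}" using fin by (intro sum_mono2) auto
    moreover have "sum (fn n) {1, q} = 4" using q(1) qn fn_1[of n] fn_prime[of q n] prime_gt_1_nat[of q] by simp
    ultimately have "2 \<le> S_f (fn n) N" unfolding S_f_def by simp
    moreover have "1 \<le> (2::nat)" by simp
    ultimately have "\<exists>D\<subseteq>{d. d dvd N}. 2 = sum (fn n) D" using pr unfolding f_practical_def by blast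
    then obtain D where D: "D \<subseteq> {d. d dvd N}" "2 = sum (fn n) D" by blast
    have finD: "finite D" using D(1) fin by (rule finite_subset)
    show False
    proof (cases "D \<subseteq> {1}")
      case True
      hence "sum (fn n) D \<le> sum (fn n) {1}" by (intro sum_mono2) auto
      thus False using D(2) fn_1[of n] by simp
    next
      case False
      then obtain d where d: "d \<in> D" "d \<noteq> 1" by blast
      have dN: "d dvd N" using d D(1) by auto
      hence dpos: "d > 0" using Npos by (auto intro: Nat.gr0I)
      obtain r :: nat where r: "prime r" "r dvd d" using prime_factor_nat[OF d(2)] by blast
      have "r dvd N" using r(2) dN by (rule dvd_trans)
      hence "\<not> r dvd n" using nd r(1) by (metis not_prime_1)
      hence "fn n d \<ge> 3" using fn_ge3[OF dpos r] by simp
      moreover have "sum (fn n) D = fn n d + sum (fn n) (D - {d})" by (rule sum.remove[OF finD d(1)])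
      ultimately show False using D(2) by linarith
    qed
  qed
next
  assume h: "N = 1 \<or> (N > 0 \<and> \<not> coprime N n)"
  show "f_practical (fn n) N"
  proof (cases "N = 1")
    case True
    have S1: "S_f (fn n) 1 = 1" unfolding S_f_def using fn_1[of n] by simp
    have "\<forall>m. 1 \<le> m \<and> m \<le> S_f (fn n) 1 \<longrightarrow> (\<exists>D\<subseteq>{d. d dvd (1::nat)}. m = sum (fn n) D)"
    proof (intro allI impI)
      fix m :: nat assume "1 \<le> m \<and> m \<le> S_f (fn n) 1"
      hence m1: "m = 1" using S1 by simp
      have "{1::nat} \<subseteq> {d. d dvd 1}" by simp
      moreover have "m = sum (fn n) {1}" using m1 fn_1[of n] by simp
      ultimately show "\<exists>D\<subseteq>{d. d dvd (1::nat)}. m = sum (fn n) D" by blast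
    qed
    thus ?thesis unfolding f_practical_def True by simp
  next
    case False
    hence Npos: "N > 0" and nc: "\<not> coprime N n" using h by blast+
    have "gcd N n \<noteq> 1" using nc coprime_iff_gcd_eq_1 by blast
    hence "\<exists>p. prime p \<and> p dvd gcd N n" by (rule prime_factor_nat)
    then obtain p :: nat where p: "prime p" "p dvd gcd N n" by blast
    have pN: "p dvd N" using p(2) gcd_dvd1 by (rule dvd_trans)
    have pn: "p dvd n" using p(2) gcd_dvd2 by (rule dvd_trans)
    have c: "complete (fn n) {d. d dvd N}" using main_complete[OF p(1) pn Npos pN] .
    have "\<forall>m. 1 \<le> m \<and> m \<le> S_f (fn n) N \<longrightarrow> (\<exists>D\<subseteq>{d. d dvd N}. m = sum (fn n) D)"
    proof (intro allI impI)
      fix m assume "1 \<le> m \<and> m \<le> S_f (fn n) N"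
      hence "m \<le> sum (fn n) {d. d dvd N}" unfolding S_f_def by simp
      thus "\<exists>D\<subseteq>{d. d dvd N}. m = sum (fn n) D" using c unfolding complete_def by simp
    qed
    thus ?thesis unfolding f_practical_def using Npos by simp
  qed
qed



definition CC :: "nat \<Rightarrow> nat \<Rightarrow> nat" where
  "CC n x = card {k\<in>{1..x}. coprime k n}"

lemma coprime_shift: "coprime (k + n) (n::nat) = coprime k n"
  by (metis coprime_iff_gcd_eq_1 gcd_add1)

lemma CC_n: "CC n n = totient n"
proof -
  have "{0<..n} = {1..(n::nat)}" by auto
  thus ?thesis unfolding CC_def totient_def totatives_def by simp
qed

lemma CC_le: "CC n x \<le> x"
proof -
  have "CC n x \<le> card {1..x}" unfolding CC_def by (rule card_mono) auto
  thus ?thesis by simp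
qed

lemma CC_shift: "CC n (x + n) = totient n + CC n x"
proof -
  let ?A = "{k\<in>{1..n}. coprime k n}"
  let ?B = "{k\<in>{1..x}. coprime k n}"
  have eq: "{k\<in>{1..x+n}. coprime k n} = ?A \<union> (\<lambda>k. k + n) ` ?B"
  proof (intro equalityI subsetI)
    fix k assume k: "k \<in> {k\<in>{1..x+n}. coprime k n}"
    show "k \<in> ?A \<union> (\<lambda>k. k + n) ` ?B"
    proof (cases "k \<le> n")
      case True thus ?thesis using k by simp
    next
      case False
      hence "k = (k - n) + n" by simp
      moreover have "coprime (k - n) n" using k False coprime_shift[of "k - n" n] by simp
      moreover have "k \<le> x + n" using k by simp
      hence "k - n \<in> {1..x}" using False by (simp only: atLeastAtMost_iff) arith
      ultimately show ?thesis by blast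
    qed
  next
    fix k assume "k \<in> ?A \<union> (\<lambda>k. k + n) ` ?B"
    thus "k \<in> {k\<in>{1..x+n}. coprime k n}"
    proof
      assume "k \<in> ?A" thus ?thesis by simp
    next
      assume "k \<in> (\<lambda>k. k + n) ` ?B"
      then obtain j where j: "k = j + n" "j \<in> ?B" by blast
      have "coprime k n" using j coprime_shift[of j n] by simp
      thus ?thesis using j by simp
    qed
  qed
  have disj: "?A \<inter> (\<lambda>k. k + n) ` ?B = {}" by auto
  have "card {k\<in>{1..x+n}. coprime k n} = card ?A + card ((\<lambda>k. k + n) ` ?B)"
    unfolding eq by (rule card_Un_disjoint) (use disj in auto)
  also have "card ((\<lambda>k. k + n) ` ?B) = card ?B" by (rule card_image) (simp add: inj_on_def)
  also have "card ?A = totient n" using CC_n unfolding CC_def .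
  finally show ?thesis unfolding CC_def by simp
qed

lemma CC_decomp: "CC n (q * n + r) = q * totient n + CC n r"
proof (induction q)
  case 0 thus ?case by simp
next
  case (Suc q)
  have "CC n (Suc q * n + r) = CC n ((q * n + r) + n)" by (rule arg_cong[where f="CC n"]) simp
  hence "CC n (Suc q * n + r) = totient n + CC n (q * n + r)" using CC_shift[of n "q * n + r"] by simp
  thus ?case using Suc.IH by simp
qed

lemma CC_bound:
  assumes "n > 0"
  shows "\<bar>real (CC n x) - real x * real (totient n) / real n\<bar> \<le> real n"
proof -
  define q r where "q = x div n" and "r = x mod n"
  have x: "x = q * n + r" unfolding q_def r_def by simp
  have rn: "r < n" unfolding r_def using assms by simp
  have C: "CC n x = q * totient n + CC n r" unfolding x by (rule CC_decomp)
  have "real x * real (totient n) / real n = real q * real (totient n) + real r * real (totient n) / real n"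
    unfolding x using assms by (simp add: field_simps)
  hence d: "real (CC n x) - real x * real (totient n) / real n = real (CC n r) - real r * real (totient n) / real n"
    unfolding C by simp
  have "CC n r \<le> r" by (rule CC_le)
  hence c1: "real (CC n r) \<le> real n" using rn by simp
  have t: "real (totient n) \<le> real n" using totient_le[of n] by simp
  have "real r * real (totient n) / real n \<le> real r * real n / real n"
    using t by (intro divide_right_mono mult_left_mono) auto
  also have "\<dots> = real r" using assms by simp
  finally have c2: "real r * real (totient n) / real n \<le> real n" using rn by simp
  have c3: "0 \<le> real r * real (totient n) / real n" by simp
  have c4: "0 \<le> real (CC n r)" by simp
  show ?thesis unfolding d abs_le_iff using c1 c2 c3 c4 by linarith
qed

lemma CC_lim:
  assumes "n > 0"
  shows "(\<lambda>x. real (CC n x) / real x) \<longlonglongrightarrow> real (totient n) / real n"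
proof (rule tendsto_sandwich)
  let ?a = "real (totient n) / real n"
  show "\<forall>\<^sub>F x in sequentially. ?a - real n / real x \<le> real (CC n x) / real x"
  proof (rule eventually_sequentiallyI[of 1])
    fix x :: nat assume "1 \<le> x"
    hence xp: "real x > 0" by simp
    have "\<bar>real (CC n x) - real x * real (totient n) / real n\<bar> \<le> real n" using CC_bound[OF assms] .
    hence "real x * ?a - real n \<le> real (CC n x)" by (simp add: abs_le_iff)
    hence "(real x * ?a - real n) / real x \<le> real (CC n x) / real x" using xp by (intro divide_right_mono) auto
    thus "?a - real n / real x \<le> real (CC n x) / real x" using xp by (simp add: field_simps)
  qed
  show "\<forall>\<^sub>F x in sequentially. real (CC n x) / real x \<le> ?a + real n / real x"
  proof (rule eventually_sequentiallyI[of 1])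
    fix x :: nat assume "1 \<le> x"
    hence xp: "real x > 0" by simp
    have "\<bar>real (CC n x) - real x * real (totient n) / real n\<bar> \<le> real n" using CC_bound[OF assms] .
    hence "real (CC n x) \<le> real x * ?a + real n" by (simp add: abs_le_iff)
    hence "real (CC n x) / real x \<le> (real x * ?a + real n) / real x" using xp by (intro divide_right_mono) auto
    thus "real (CC n x) / real x \<le> ?a + real n / real x" using xp by (simp add: field_simps)
  qed
  show "(\<lambda>x. ?a - real n / real x) \<longlonglongrightarrow> ?a"
    using tendsto_diff[OF tendsto_const lim_const_over_n[of "real n"]] by simp
  show "(\<lambda>x. ?a + real n / real x) \<longlonglongrightarrow> ?a"
    using tendsto_add[OF tendsto_const lim_const_over_n[of "real n"]] by simp
qed


lemma card_P:
  assumes x: "x \<ge> 1"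
  shows "card ({N. f_practical (fn n) N} \<inter> {1..x}) = 1 + (x - CC n x)"
proof -
  let ?NC = "{k\<in>{1..x}. \<not> coprime k n}"
  let ?C = "{k\<in>{1..x}. coprime k n}"
  have eq: "{N. f_practical (fn n) N} \<inter> {1..x} = insert 1 ?NC"
  proof (intro equalityI subsetI)
    fix k assume "k \<in> {N. f_practical (fn n) N} \<inter> {1..x}"
    hence k: "f_practical (fn n) k" "k \<in> {1..x}" by auto
    hence "k = 1 \<or> (k > 0 \<and> \<not> coprime k n)" using practical_iff by blast
    thus "k \<in> insert 1 ?NC" using k(2) by blast
  next
    fix k assume k: "k \<in> insert 1 ?NC"
    hence "k = 1 \<or> (k > 0 \<and> \<not> coprime k n)" by auto
    hence "f_practical (fn n) k" using practical_iff by blast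
    moreover have "k \<in> {1..x}" using k x by auto
    ultimately show "k \<in> {N. f_practical (fn n) N} \<inter> {1..x}" by blast
  qed
  have n1: "1 \<notin> ?NC" by simp
  have "?NC = {1..x} - ?C" by blast
  hence "card ?NC = card {1..x} - card ?C" by (metis (no_types, lifting) card_Diff_subset finite_atLeastAtMost finite_subset mem_Collect_eq subsetI)
  hence "card ?NC = x - CC n x" unfolding CC_def by simp
  moreover have "finite ?NC" by simp
  ultimately show ?thesis unfolding eq using n1 by simp
qed

theorem lemma4p3:
  fixes n :: nat
  assumes "n > 0"
  shows "\<exists>f :: nat \<Rightarrow> nat.
           multiplicative_fun f \<and>
           (\<forall>x. x > 0 \<longrightarrow> f x > 0) \<and>
           (\<forall>p k. prime p \<and> k \<ge> 1 \<longrightarrow> f (p ^ (k - 1)) \<le> f (p ^ k)) \<and>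
           has_density {N. f_practical f N} (1 - real (totient n) / real n)"
proof (intro exI conjI)
  show "multiplicative_fun (fn n)" unfolding multiplicative_fun_def using fn_1 fn_mult by blast
  show "\<forall>x. x > 0 \<longrightarrow> fn n x > 0" using fn_pos by blast
  show "\<forall>p k. prime p \<and> k \<ge> 1 \<longrightarrow> fn n (p ^ (k - 1)) \<le> fn n (p ^ k)" using fn_mono by blast
  have lim: "(\<lambda>x. 1 / real x + (1 - real (CC n x) / real x)) \<longlonglongrightarrow> 0 + (1 - real (totient n) / real n)"
    by (intro tendsto_add tendsto_diff tendsto_const CC_lim[OF assms] lim_const_over_n)
  have ev: "\<forall>\<^sub>F x in sequentially. 1 / real x + (1 - real (CC n x) / real x) =
      real (card ({N. f_practical (fn n) N} \<inter> {1..x})) / real x"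
  proof (rule eventually_sequentiallyI[of 1])
    fix x :: nat assume x: "1 \<le> x"
    have le: "CC n x \<le> x" by (rule CC_le)
    have "real (card ({N. f_practical (fn n) N} \<inter> {1..x})) = 1 + real x - real (CC n x)"
      unfolding card_P[OF x] using le by (simp add: of_nat_diff)
    thus "1 / real x + (1 - real (CC n x) / real x) =
      real (card ({N. f_practical (fn n) N} \<inter> {1..x})) / real x" using x by (simp add: field_simps)
  qed
  show "has_density {N. f_practical (fn n) N} (1 - real (totient n) / real n)"
    unfolding has_density_def using Lim_transform_eventually[OF lim ev] by simp
qed

end
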